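(* Let $\Bbbk$ be a field and $f(t)=1+\sum_{k\ge1}a_kt^k\in\Bbbk[[t]]$, with $a_0=1$. Write $\frac1{f(t)}=\sum_{k\ge0}D_k(f)t^k$. Let $P_{f,k}(t)=(-1)^k\det\begin{pmatrix} 1&a_1t&\ldots &a_kt^k\\ 1&a_1&\ldots &a_k\\ 0&1&\ldots &a_{k-1}\\ \vdots&\ddots&\ddots&\vdots\\ 0&\ldots &1&a_1 \end{pmatrix}$ for $k\ge1$, $P_{f,0}=1$. Then: (a) $P_{f,k}(t)=\sum_{j=0}^k a_jD_{k-j}(f)\,t^j$ for all $k\ge0$; (b) for any $\Bbbk$-algebra $\mathcal A$ and $x,y\in\mathcal A$, $f(x)\,y\,f(x)^{-1}=y+z_1+z_2+\cdots$, where $z_k=\sum_{i=0}^k a_iD_{k-i}(f)\,x^iyx^{k-i}$ for $k\ge1$.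
   Context: $D_k(f)$ equals $(-1)^k\det$ of the $k\times k$ Toeplitz matrix with first row $(a_1,\dots,a_k)$, and row $r\ge2$ having zeros in its first $r-2$ entries, $1$ in entry $r-1$, then $a_1,a_2,\dots$; $D_0(f)=1$. In (b) the infinite sum is understood formally, e.g. replacing $x$ by $\tau x$ for a formal variable $\tau$ and reading the identity in $\mathcal A[[\tau]]$. *)

theory Defs
  imports "Jordan_Normal_Form.Determinant"
          "HOL-Computational_Algebra.Formal_Power_Series"
begin

definition D :: "'a::field fps \<Rightarrow> nat \<Rightarrow> 'a" where
  "D f k = fps_nth (inverse f) k"

text \<open>The (k+1)x(k+1) matrix of the paper (rows/columns indexed from 0):
  row 0 is (1, a_1 t, ..., a_k t^k); row r \<ge> 1 has zeros in columns j < r-1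
  and a_(j-r+1) in column j \<ge> r-1 (so row 1 is (1, a_1, ..., a_k)).\<close>
definition P_mat :: "'a::field fps \<Rightarrow> nat \<Rightarrow> 'a poly mat" where
  "P_mat f k = mat (k+1) (k+1) (\<lambda>(r, j).
      if r = 0 then monom (fps_nth f j) j
      else if r - 1 \<le> j then [: fps_nth f (j + 1 - r) :] else 0)"

definition P :: "'a::field fps \<Rightarrow> nat \<Rightarrow> 'a poly" where
  "P f k = (if k = 0 then 1 else (-1) ^ k * det (P_mat f k))"

text \<open>phi : k \<rightarrow> A is the structure map making the ring A a (unital, associative)
  k-algebra: a unital ring homomorphism with central image.\<close>
definition algebra_map :: "('a::field \<Rightarrow> 'b::ring_1) \<Rightarrow> bool" where
  "algebra_map \<phi> \<longleftrightarrow> \<phi> 1 = 1 \<and> (\<forall>a b. \<phi> (a + b) = \<phi> a + \<phi> b)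
     \<and> (\<forall>a b. \<phi> (a * b) = \<phi> a * \<phi> b) \<and> (\<forall>a z. \<phi> a * z = z * \<phi> a)"

text \<open>f(\<tau> x) in A[[\<tau>]], with scalar multiplication c\<cdot>u written \<phi> c * u.\<close>
definition subst_fps :: "('a::field \<Rightarrow> 'b::ring_1) \<Rightarrow> 'a fps \<Rightarrow> 'b \<Rightarrow> 'b fps" where
  "subst_fps \<phi> f x = Abs_fps (\<lambda>k. \<phi> (fps_nth f k) * x ^ k)"

end

theory Submission
  imports Defs
begin

lemma conv_fD:
  fixes f :: "'a::field fps"
  assumes "fps_nth f 0 = 1"
  shows "(\<Sum>i\<le>n. fps_nth f i * D f (n - i)) = (if n = 0 then 1 else 0)"
proof -
  have "f * inverse f = 1" by (rule inverse_mult_eq_1') (simp add: assms)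
  then have "fps_nth (f * inverse f) n = (if n = 0 then 1 else 0)" by simp
  then show ?thesis by (simp add: fps_mult_nth D_def atLeast0AtMost)
qed

lemma conv_Df:
  fixes f :: "'a::field fps"
  assumes "fps_nth f 0 = 1"
  shows "(\<Sum>i\<le>n. D f i * fps_nth f (n - i)) = (if n = 0 then 1 else 0)"
proof -
  have "inverse f * f = 1" by (rule inverse_mult_eq_1) (simp add: assms)
  then have "fps_nth (inverse f * f) n = (if n = 0 then 1 else 0)" by simp
  then show ?thesis by (simp add: fps_mult_nth D_def atLeast0AtMost)
qed

lemma D0: "fps_nth f 0 = 1 \<Longrightarrow> D f 0 = 1"
  using conv_fD[of f 0] by simp

lemma am_zero: "algebra_map \<phi> \<Longrightarrow> \<phi> 0 = 0"
proof -
  assume "algebra_map \<phi>"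
  then have "\<phi> (0 + 0) = \<phi> 0 + \<phi> 0" unfolding algebra_map_def by blast
  then show "\<phi> 0 = 0" by simp
qed

lemma am_sum: "algebra_map \<phi> \<Longrightarrow> \<phi> (\<Sum>i\<in>A. g i) = (\<Sum>i\<in>A. \<phi> (g i))"
proof (induction A rule: infinite_finite_induct)
  case (infinite A) then show ?case by (simp add: am_zero)
next
  case empty then show ?case by (simp add: am_zero)
next
  case (insert x F)
  then have "\<phi> (g x + sum g F) = \<phi> (g x) + \<phi> (sum g F)" unfolding algebra_map_def by blast
  with insert show ?case by simp
qed

lemma partb:
  fixes f :: "'a::field fps" and \<phi> :: "'a \<Rightarrow> 'b::ring_1" and x y :: 'b
  assumes f0: "fps_nth f 0 = 1" and am: "algebra_map \<phi>"
  defines "F \<equiv> subst_fps \<phi> f x"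
  defines "G0 \<equiv> Abs_fps (\<lambda>k. \<phi> (D f k) * x ^ k)"
  shows "F * G0 = 1" "G0 * F = 1"
    "F * fps_const y * G0 = Abs_fps (\<lambda>k. if k = 0 then y
                    else (\<Sum>i\<le>k. \<phi> (fps_nth f i * D f (k - i)) * x ^ i * y * x ^ (k - i)))"
proof -
  have mul: "\<phi> (a * b) = \<phi> a * \<phi> b" for a b using am unfolding algebra_map_def by blast
  have cen: "\<phi> a * z = z * \<phi> a" for a z using am unfolding algebra_map_def by blast
  have one: "\<phi> 1 = 1" using am unfolding algebra_map_def by blast
  have z: "\<phi> 0 = 0" using am by (rule am_zero)
  have sm: "\<phi> (\<Sum>i\<in>A. g i) = (\<Sum>i\<in>A. \<phi> (g i))" for A and g :: "nat \<Rightarrow> 'a"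
    using am by (rule am_sum)
  have xx: "x ^ i * x ^ (n - i) = x ^ n" if "i \<le> n" for i n :: nat
    using that by (metis le_add_diff_inverse power_add)
  show "F * G0 = 1"
  proof (rule fps_ext)
    fix n
    have "fps_nth (F * G0) n = (\<Sum>i\<le>n. \<phi> (fps_nth f i) * x ^ i * (\<phi> (D f (n - i)) * x ^ (n - i)))"
      by (simp add: F_def G0_def subst_fps_def fps_mult_nth atLeast0AtMost)
    also have "\<dots> = (\<Sum>i\<le>n. \<phi> (fps_nth f i * D f (n - i)) * x ^ n)"
    proof (rule sum.cong[OF refl])
      fix i assume "i \<in> {..n}"
      then have "i \<le> n" by simp
      have "\<phi> (fps_nth f i) * x ^ i * (\<phi> (D f (n - i)) * x ^ (n - i))
          = \<phi> (fps_nth f i) * (x ^ i * \<phi> (D f (n - i))) * x ^ (n - i)" by (simp add: mult.assoc)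
      also have "\<dots> = \<phi> (fps_nth f i) * \<phi> (D f (n - i)) * (x ^ i * x ^ (n - i))"
        using cen[of _ "x ^ i"] by (metis mult.assoc)
      finally show "\<phi> (fps_nth f i) * x ^ i * (\<phi> (D f (n - i)) * x ^ (n - i)) = \<phi> (fps_nth f i * D f (n - i)) * x ^ n"
        using xx[OF \<open>i \<le> n\<close>] by (simp add: mul)
    qed
    also have "\<dots> = \<phi> (\<Sum>i\<le>n. fps_nth f i * D f (n - i)) * x ^ n"
      by (simp add: sm sum_distrib_right)
    also have "\<dots> = fps_nth (1 :: 'b fps) n" using conv_fD[OF f0, of n] by (simp add: one z)
    finally show "fps_nth (F * G0) n = fps_nth (1 :: 'b fps) n" .
  qed
  show "G0 * F = 1"
  proof (rule fps_ext)
    fix n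
    have "fps_nth (G0 * F) n = (\<Sum>i\<le>n. \<phi> (D f i) * x ^ i * (\<phi> (fps_nth f (n - i)) * x ^ (n - i)))"
      by (simp add: F_def G0_def subst_fps_def fps_mult_nth atLeast0AtMost)
    also have "\<dots> = (\<Sum>i\<le>n. \<phi> (D f i * fps_nth f (n - i)) * x ^ n)"
    proof (rule sum.cong[OF refl])
      fix i assume "i \<in> {..n}"
      then have "i \<le> n" by simp
      have "\<phi> (D f i) * x ^ i * (\<phi> (fps_nth f (n - i)) * x ^ (n - i))
          = \<phi> (D f i) * (x ^ i * \<phi> (fps_nth f (n - i))) * x ^ (n - i)" by (simp add: mult.assoc)
      also have "\<dots> = \<phi> (D f i) * \<phi> (fps_nth f (n - i)) * (x ^ i * x ^ (n - i))"
        using cen[of _ "x ^ i"] by (metis mult.assoc)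
      finally show "\<phi> (D f i) * x ^ i * (\<phi> (fps_nth f (n - i)) * x ^ (n - i)) = \<phi> (D f i * fps_nth f (n - i)) * x ^ n"
        using xx[OF \<open>i \<le> n\<close>] by (simp add: mul)
    qed
    also have "\<dots> = \<phi> (\<Sum>i\<le>n. D f i * fps_nth f (n - i)) * x ^ n"
      by (simp add: sm sum_distrib_right)
    also have "\<dots> = fps_nth (1 :: 'b fps) n" using conv_Df[OF f0, of n] by (simp add: one z)
    finally show "fps_nth (G0 * F) n = fps_nth (1 :: 'b fps) n" .
  qed
  show "F * fps_const y * G0 = Abs_fps (\<lambda>k. if k = 0 then y
                    else (\<Sum>i\<le>k. \<phi> (fps_nth f i * D f (k - i)) * x ^ i * y * x ^ (k - i)))"
  proof (rule fps_ext)
    fix n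
    have "fps_nth (F * fps_const y * G0) n = (\<Sum>i\<le>n. \<phi> (fps_nth f i) * x ^ i * y * (\<phi> (D f (n - i)) * x ^ (n - i)))"
      unfolding fps_mult_nth[of "F * fps_const y" G0] fps_mult_right_const_nth
      by (simp add: F_def G0_def subst_fps_def atLeast0AtMost)
    also have "\<dots> = (\<Sum>i\<le>n. \<phi> (fps_nth f i * D f (n - i)) * x ^ i * y * x ^ (n - i))"
    proof (rule sum.cong[OF refl])
      fix i assume "i \<in> {..n}"
      have "\<phi> (fps_nth f i) * x ^ i * y * (\<phi> (D f (n - i)) * x ^ (n - i))
          = \<phi> (fps_nth f i) * ((x ^ i * y) * \<phi> (D f (n - i))) * x ^ (n - i)" by (simp add: mult.assoc)
      also have "\<dots> = \<phi> (fps_nth f i) * \<phi> (D f (n - i)) * (x ^ i * y) * x ^ (n - i)"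
        using cen[of _ "x ^ i * y"] by (metis mult.assoc)
      finally show "\<phi> (fps_nth f i) * x ^ i * y * (\<phi> (D f (n - i)) * x ^ (n - i)) = \<phi> (fps_nth f i * D f (n - i)) * x ^ i * y * x ^ (n - i)"
        by (simp add: mul mult.assoc)
    qed
    also have "\<dots> = fps_nth (Abs_fps (\<lambda>k. if k = 0 then y
                    else (\<Sum>i\<le>k. \<phi> (fps_nth f i * D f (k - i)) * x ^ i * y * x ^ (k - i)))) n"
      using D0[OF f0] f0 by (simp add: one)
    finally show "fps_nth (F * fps_const y * G0) n = fps_nth (Abs_fps (\<lambda>k. if k = 0 then y
                    else (\<Sum>i\<le>k. \<phi> (fps_nth f i * D f (k - i)) * x ^ i * y * x ^ (k - i)))) n" .
  qed
qed

lemma sum_pconst: "(\<Sum>i\<in>A. [:g i:]) = [:\<Sum>i\<in>A. g i:]"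
  by (induction A rule: infinite_finite_induct) auto

lemma shift_conv:
  fixes f :: "'a::field fps"
  assumes f0: "fps_nth f 0 = 1" and r: "1 \<le> r" and jk: "j \<le> k"
  shows "(\<Sum>i<k+1. (if r - 1 \<le> i \<and> i \<le> j then fps_nth f (i + 1 - r) * D f (j - i) else 0))
     = (if j = r - 1 then 1 else 0)" (is "?L = _")
proof (cases "j < r - 1")
  case True
  then have "?L = 0" by (intro sum.neutral) auto
  with True show ?thesis by simp
next
  case False
  define s where "s = r - 1"
  define n where "n = j - s"
  have js: "j = n + s" using False unfolding n_def s_def by simp
  have "?L = (\<Sum>i<k+1. (if i \<in> {s..j} then fps_nth f (i + 1 - r) * D f (j - i) else 0))"
    unfolding s_def by (intro sum.cong) auto
  also have "\<dots> = (\<Sum>i\<in>{..<k+1} \<inter> {s..j}. fps_nth f (i + 1 - r) * D f (j - i))"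
    by (rule sum.inter_restrict[symmetric]) simp
  also have "{..<k+1} \<inter> {s..j} = {0+s..n+s}" using jk js by auto
  also have "(\<Sum>i\<in>{0+s..n+s}. fps_nth f (i + 1 - r) * D f (j - i))
      = (\<Sum>i\<in>{0..n}. fps_nth f (i + s + 1 - r) * D f (j - (i + s)))"
    by (rule sum.shift_bounds_cl_nat_ivl)
  also have "\<dots> = (\<Sum>i\<le>n. fps_nth f i * D f (n - i))"
    using r js unfolding s_def atLeast0AtMost by (intro sum.cong) auto
  also have "\<dots> = (if n = 0 then 1 else 0)" by (rule conv_fD[OF f0])
  finally show ?thesis using js s_def False by auto
qed

lemma monom_const: "monom a i * [:c:] = monom (a * c) i"
  by (metis monom_0 mult_monom add_0_right)

lemma parta:
  fixes f :: "'a::field fps"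
  assumes f0: "fps_nth f 0 = 1"
  shows "P f k = (\<Sum>j\<le>k. monom (fps_nth f j * D f (k - j)) j)"
proof (cases "k = 0")
  case True
  then show ?thesis using f0 D0[OF f0] by (simp add: P_def monom_0 one_pCons)
next
  case False
  define M where "M = P_mat f k"
  define C :: "'a poly mat" where "C = mat (k+1) (k+1) (\<lambda>(i,j). if i \<le> j then [:D f (j-i):] else 0)"
  define Q where "Q j = (\<Sum>i\<le>j. monom (fps_nth f i * D f (j - i)) i)" for j
  define N :: "'a poly mat" where "N = mat (k+1) (k+1) (\<lambda>(r,j). if r = 0 then Q j else if j = r - 1 then 1 else 0)"
  have Mc: "M \<in> carrier_mat (k+1) (k+1)" unfolding M_def P_mat_def by simp
  have Cc: "C \<in> carrier_mat (k+1) (k+1)" unfolding C_def by simp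
  have Nc: "N \<in> carrier_mat (k+1) (k+1)" unfolding N_def by simp
  have MC: "M * C = N"
  proof (rule eq_matI)
    fix r j assume r: "r < dim_row N" and j: "j < dim_col N"
    then have rk: "r < k+1" and jk: "j < k+1" unfolding N_def by auto
    have e: "(M * C) $$ (r, j) = (\<Sum>i<k+1. M $$ (r,i) * C $$ (i,j))"
      using rk jk Mc Cc by (simp add: scalar_prod_def lessThan_atLeast0)
    show "(M * C) $$ (r, j) = N $$ (r, j)"
    proof (cases "r = 0")
      case True
      have "(\<Sum>i<k+1. M $$ (r,i) * C $$ (i,j))
          = (\<Sum>i<k+1. if i \<in> {..j} then monom (fps_nth f i * D f (j - i)) i else 0)"
        using True jk by (intro sum.cong) (auto simp: M_def C_def P_mat_def monom_const smult_monom mult.commute)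
      also have "\<dots> = (\<Sum>i\<in>{..<k+1} \<inter> {..j}. monom (fps_nth f i * D f (j - i)) i)"
        by (rule sum.inter_restrict[symmetric]) simp
      also have "{..<k+1} \<inter> {..j} = {..j}" using jk by auto
      finally show ?thesis using e True rk jk by (simp add: N_def Q_def)
    next
      case False
      have "(\<Sum>i<k+1. M $$ (r,i) * C $$ (i,j))
          = (\<Sum>i<k+1. [:(if r - 1 \<le> i \<and> i \<le> j then fps_nth f (i + 1 - r) * D f (j - i) else 0):])"
        using False rk jk by (intro sum.cong) (auto simp: M_def C_def P_mat_def)
      also have "\<dots> = [:(if j = r - 1 then 1 else 0):]"
        unfolding sum_pconst using shift_conv[OF f0, of r j k] False jk by simp
      finally show ?thesis using e False rk jk by (simp add: N_def one_pCons)
    qed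
  qed (auto simp: N_def M_def P_mat_def C_def)
  have detC: "det C = 1"
  proof -
    have "upper_triangular C" unfolding upper_triangular_def C_def by auto
    then have "det C = prod_list (diag_mat C)" using Cc by (rule det_upper_triangular)
    also have "\<dots> = 1" unfolding prod_list_diag_prod using D0[OF f0]
      by (simp add: C_def flip: one_pCons)
    finally show ?thesis .
  qed
  have del: "mat_delete N 0 k = 1\<^sub>m k"
    by (rule eq_matI) (auto simp: mat_delete_def N_def)
  have detN: "det N = (-1)^k * Q k"
  proof -
    have "det N = (\<Sum>i<Suc k. N $$ (i,k) * cofactor N i k)"
      using laplace_expansion_column[OF Nc, of k] by simp
    also have "\<dots> = N $$ (0,k) * cofactor N 0 k + (\<Sum>i<k. N $$ (Suc i,k) * cofactor N (Suc i) k)"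
      by (rule sum.lessThan_Suc_shift)
    also have "(\<Sum>i<k. N $$ (Suc i,k) * cofactor N (Suc i) k) = 0"
      by (intro sum.neutral) (auto simp: N_def)
    also have "N $$ (0,k) * cofactor N 0 k = Q k * (-1)^k"
      unfolding cofactor_def del by (simp add: N_def)
    finally show ?thesis by simp
  qed
  have "det M = (-1)^k * Q k"
    using det_mult[OF Mc Cc] MC detC detN by simp
  then have "P f k = ((-1)^k * (-1)^k) * Q k" using False by (simp add: P_def M_def)
  also have "(-1)^k * (-1)^k = (1 :: 'a poly)" by (simp flip: power_add)
  finally show ?thesis by (simp add: Q_def)
qed

theorem proposition2p3:
  fixes f :: "'a::field fps"
  assumes "fps_nth f 0 = 1"
  shows "(\<forall>k. P f k = (\<Sum>j\<le>k. monom (fps_nth f j * D f (k - j)) j))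
    \<and> (\<forall>(\<phi> :: 'a \<Rightarrow> 'b::ring_1) x y. algebra_map \<phi> \<longrightarrow>
         (let F = subst_fps \<phi> f x;
              Z = Abs_fps (\<lambda>k. if k = 0 then y
                    else (\<Sum>i\<le>k. \<phi> (fps_nth f i * D f (k - i)) * x ^ i * y * x ^ (k - i)))
          in (\<exists>G. F * G = 1 \<and> G * F = 1)
             \<and> (\<forall>G. F * G = 1 \<and> G * F = 1 \<longrightarrow> F * fps_const y * G = Z)))"
proof (intro conjI allI impI)
  fix k show "P f k = (\<Sum>j\<le>k. monom (fps_nth f j * D f (k - j)) j)" by (rule parta[OF assms])
next
  fix \<phi> :: "'a \<Rightarrow> 'b::ring_1" and x y
  assume am: "algebra_map \<phi>"
  define G0 where "G0 = Abs_fps (\<lambda>k. \<phi> (D f k) * x ^ k)"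
  note pb = partb(1,2)[OF assms am, where x=x] partb(3)[OF assms am, where x=x and y=y]
  show "let F = subst_fps \<phi> f x;
              Z = Abs_fps (\<lambda>k. if k = 0 then y
                    else (\<Sum>i\<le>k. \<phi> (fps_nth f i * D f (k - i)) * x ^ i * y * x ^ (k - i)))
          in (\<exists>G. F * G = 1 \<and> G * F = 1)
             \<and> (\<forall>G. F * G = 1 \<and> G * F = 1 \<longrightarrow> F * fps_const y * G = Z)"
    unfolding Let_def
  proof (intro conjI allI impI)
    show "\<exists>G. subst_fps \<phi> f x * G = 1 \<and> G * subst_fps \<phi> f x = 1"
      using pb by blast
  next
    fix G assume G: "subst_fps \<phi> f x * G = 1 \<and> G * subst_fps \<phi> f x = 1"
    have "G = G * (subst_fps \<phi> f x * Abs_fps (\<lambda>k. \<phi> (D f k) * x ^ k))" using pb by simp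
    also have "\<dots> = Abs_fps (\<lambda>k. \<phi> (D f k) * x ^ k)" using G by (simp add: mult.assoc[symmetric])
    finally show "subst_fps \<phi> f x * fps_const y * G = Abs_fps (\<lambda>k. if k = 0 then y
                    else (\<Sum>i\<le>k. \<phi> (fps_nth f i * D f (k - i)) * x ^ i * y * x ^ (k - i)))"
      using pb by simp
  qed
qed

end
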